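(* Let $F=\langle f_1,\ldots,f_k\rangle$ be a normalized solution to an instance $(\mathcal{T}_{initial},\mathcal{T}_{final},k)$ of Flip Distance, and let $C$ be a component of $\mathcal{D}_F$. Let $f_i$ and $f_h$, with $i<h$, be two flips in $C$. If one of the following conditions holds, then there is a directed path from $f_i$ to $f_h$ in $C$: (1) $\phi(f_h)$ crosses $\epsilon(f_i)$; (2) $\phi(f_h)=\epsilon(f_i)$; (3) $\epsilon(f_i)=\epsilon(f_h)$; (4) $\phi(f_i)=\epsilon(f_h)$, or $\phi(f_i)$ and $\epsilon(f_h)$ share a triangle $T$ in $\mathcal{T}_j$ for some $j$ with $i\le j<h$.
   Context: A triangulation of a finite point set $\mathcal{P}$ in the plane is a partition of the convex hull of $\mathcal{P}$ into triangles whose vertex set is $\mathcal{P}$. For an interior edge $e$ of a triangulation $\mathcal{T}$, the quadrilateral associated with $e$ is the union of the two triangles of $\mathcal{T}$ sharing $e$. A flip $f$ with underlying edge $\epsilon(f)=e$ is admissible in $\mathcal{T}$ if $e\in\mathcal{T}$ and its associated quadrilateral is convex; performing it replaces $e$ by the other diagonal $\phi(f)$ of that quadrilateral. Two distinct edges share a triangle in $\mathcal{T}$ if they are edges of the same triangle of $\mathcal{T}$; two edges between points of $\mathcal{P}$ cross if they intersect in their interiors. A sequence $F=\langle f_1,\ldots,f_r\rangle$ is valid with respect to $\mathcal{T}$ if there are triangulations $\mathcal{T}_0=\mathcal{T},\mathcal{T}_1,\ldots,\mathcal{T}_r$ such that $f_i$ is admissible in $\mathcal{T}_{i-1}$ and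 performing it yields $\mathcal{T}_i$; then we write $\mathcal{T}\xrightarrow{F}\mathcal{T}_r$. Flips in a sequence are distinct objects even if they have the same underlying edge. For $1\le i<j\le r$, flip $f_j$ is adjacent to $f_i$ (written $f_i\to f_j$) if (1) either $\phi(f_i)=\epsilon(f_j)$ or $\phi(f_i)$ and $\epsilon(f_j)$ share a triangle in $\mathcal{T}_{j-1}$, and (2) there is no $p$ with $i<p<j$ and $\epsilon(f_p)=\phi(f_i)$. $\mathcal{D}_F$ is the directed acyclic graph whose nodes are the flips of $F$ and whose arcs are the pairs $f_i\to f_j$; a component of it is a weakly connected component. The flip distance between two triangulations is the minimum length of a valid sequence transforming one into the other. An instance $(\mathcal{T}_{initial},\mathcal{T}_{final},k)$ of Flip Distance consists of two triangulations of $\mathcal{P}$ and $k\in\mathbb{N}$; a solution is a valid sequence $F$ of length $k$ with $\mathcal{T}_{initial}\xrightarrow{F}\mathcal{T}_{final}$, where $k$ is the flip distance between them. For a solution $F=\langle f_1,\ldots,f_k\rangle$, $\mathcal{T}_j$ denotes the outcome of applying $\langle f_1,\ldots,f_j\rangle$ to $\mathcal{T}_{initial}$. A changed edge is an edge of $\mathcal{T}_{initial}$ not in $\mathcal{T}_{final}$; a component of $\mathcal{D}_F$ is essential if it contains a flip whose underlying edge is a changed edge. A solution $F$ is normalized if every component of $\mathcal{D}_F$ is essential and the flips of each component of $\mathcal{D}_F$ appear as a consecutive block in $F$. *)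

theory Defs
  imports "HOL-Analysis.Analysis"
begin

type_synonym pt = "real \<times> real"

text \<open>Triangles and edges are represented by their vertex sets.\<close>
definition is_triangle :: "pt set \<Rightarrow> bool" where
  "is_triangle t \<longleftrightarrow> card t = 3 \<and> \<not> collinear t"

definition triangulation :: "pt set \<Rightarrow> pt set set \<Rightarrow> bool" where
  "triangulation P T \<longleftrightarrow> finite T \<and> (\<forall>t\<in>T. is_triangle t \<and> t \<subseteq> P) \<and> \<Union>T = P
     \<and> \<Union>((\<lambda>t. convex hull t) ` T) = convex hull P
     \<and> (\<forall>t\<in>T. \<forall>t'\<in>T. convex hull t \<inter> convex hull t' = convex hull (t \<inter> t'))"

definition tri_edges :: "pt set set \<Rightarrow> pt set set" where
  "tri_edges T = {e. card e = 2 \<and> (\<exists>t\<in>T. e \<subseteq> t)}"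

definition share_tri :: "pt set set \<Rightarrow> pt set \<Rightarrow> pt set \<Rightarrow> bool" where
  "share_tri T e1 e2 \<longleftrightarrow> e1 \<noteq> e2 \<and> card e1 = 2 \<and> card e2 = 2 \<and> (\<exists>t\<in>T. e1 \<subseteq> t \<and> e2 \<subseteq> t)"

definition crosses :: "pt set \<Rightarrow> pt set \<Rightarrow> bool" where
  "crosses e1 e2 \<longleftrightarrow> (\<exists>a b c d. e1 = {a, b} \<and> e2 = {c, d} \<and> a \<noteq> b \<and> c \<noteq> d \<and>
       open_segment a b \<inter> open_segment c d \<noteq> {})"

text \<open>The quadrilateral formed by triangles abc and abd is convex (a genuine convex
  4-gon: the union is convex and each of the four points is a corner).\<close>
definition convex_quad :: "pt \<Rightarrow> pt \<Rightarrow> pt \<Rightarrow> pt \<Rightarrow> bool" where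
  "convex_quad a b c d \<longleftrightarrow> convex (convex hull {a, b, c} \<union> convex hull {a, b, d}) \<and>
     (\<forall>x\<in>{a, b, c, d}. x \<notin> convex hull ({a, b, c, d} - {x}))"

definition flip_step :: "pt set \<Rightarrow> pt set set \<Rightarrow> pt set \<Rightarrow> pt set \<Rightarrow> pt set set \<Rightarrow> bool" where
  "flip_step P T e e' T' \<longleftrightarrow> triangulation P T \<and>
     (\<exists>a b c d. e = {a, b} \<and> e' = {c, d} \<and> a \<noteq> b \<and> c \<noteq> d \<and>
        {a, b, c} \<in> T \<and> {a, b, d} \<in> T \<and> convex_quad a b c d \<and>
        T' = (T - {{a, b, c}, {a, b, d}}) \<union> {{a, c, d}, {b, c, d}})"

text \<open>A flip sequence f_1..f_k is given by F :: nat => (edge * edge), with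
  F j = (epsilon(f_j), phi(f_j)); Ts j is the triangulation T_j.\<close>
definition eps :: "(nat \<Rightarrow> pt set \<times> pt set) \<Rightarrow> nat \<Rightarrow> pt set" where
  "eps F j = fst (F j)"
definition phi :: "(nat \<Rightarrow> pt set \<times> pt set) \<Rightarrow> nat \<Rightarrow> pt set" where
  "phi F j = snd (F j)"

definition valid_seq :: "pt set \<Rightarrow> pt set set \<Rightarrow> nat \<Rightarrow> (nat \<Rightarrow> pt set \<times> pt set)
    \<Rightarrow> (nat \<Rightarrow> pt set set) \<Rightarrow> bool" where
  "valid_seq P T k F Ts \<longleftrightarrow> Ts 0 = T \<and>
     (\<forall>j\<in>{1..k}. flip_step P (Ts (j - 1)) (eps F j) (phi F j) (Ts j))"

definition flip_distance :: "pt set \<Rightarrow> pt set set \<Rightarrow> pt set set \<Rightarrow> nat" where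
  "flip_distance P T1 T2 = (LEAST n. \<exists>F Ts. valid_seq P T1 n F Ts \<and> Ts n = T2)"

definition is_solution :: "pt set \<Rightarrow> pt set set \<Rightarrow> pt set set \<Rightarrow> nat \<Rightarrow> (nat \<Rightarrow> pt set \<times> pt set)
    \<Rightarrow> (nat \<Rightarrow> pt set set) \<Rightarrow> bool" where
  "is_solution P Ti Tf k F Ts \<longleftrightarrow> triangulation P Ti \<and> triangulation P Tf \<and>
     valid_seq P Ti k F Ts \<and> Ts k = Tf \<and> k = flip_distance P Ti Tf"

definition adjacent :: "nat \<Rightarrow> (nat \<Rightarrow> pt set \<times> pt set) \<Rightarrow> (nat \<Rightarrow> pt set set) \<Rightarrow> nat \<Rightarrow> nat \<Rightarrow> bool" where
  "adjacent k F Ts i j \<longleftrightarrow> 1 \<le> i \<and> i < j \<and> j \<le> k \<and>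
     (phi F i = eps F j \<or> share_tri (Ts (j - 1)) (phi F i) (eps F j)) \<and>
     \<not> (\<exists>p. i < p \<and> p < j \<and> eps F p = phi F i)"

definition dag_arcs :: "nat \<Rightarrow> (nat \<Rightarrow> pt set \<times> pt set) \<Rightarrow> (nat \<Rightarrow> pt set set) \<Rightarrow> (nat \<times> nat) set" where
  "dag_arcs k F Ts = {(i, j). adjacent k F Ts i j}"

definition dag_components :: "nat \<Rightarrow> (nat \<Rightarrow> pt set \<times> pt set) \<Rightarrow> (nat \<Rightarrow> pt set set) \<Rightarrow> nat set set" where
  "dag_components k F Ts =
     (\<lambda>i. {j \<in> {1..k}. (i, j) \<in> (dag_arcs k F Ts \<union> (dag_arcs k F Ts)\<inverse>)\<^sup>*}) ` {1..k}"

definition essential :: "pt set set \<Rightarrow> pt set set \<Rightarrow> (nat \<Rightarrow> pt set \<times> pt set) \<Rightarrow> nat set \<Rightarrow> bool" where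
  "essential Ti Tf F C \<longleftrightarrow> (\<exists>j\<in>C. eps F j \<in> tri_edges Ti - tri_edges Tf)"

definition normalized :: "pt set \<Rightarrow> pt set set \<Rightarrow> pt set set \<Rightarrow> nat \<Rightarrow> (nat \<Rightarrow> pt set \<times> pt set)
    \<Rightarrow> (nat \<Rightarrow> pt set set) \<Rightarrow> bool" where
  "normalized P Ti Tf k F Ts \<longleftrightarrow> is_solution P Ti Tf k F Ts \<and>
     (\<forall>C\<in>dag_components k F Ts. essential Ti Tf F C \<and> (\<exists>a b. C = {a..<b}))"

end

theory Submission
  imports Defs
begin

definition det2 :: "pt \<Rightarrow> pt \<Rightarrow> real" where
  "det2 u v = fst u * snd v - snd u * fst v"

lemma tri_indep:
  assumes "is_triangle t" shows "\<not> affine_dependent t"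
proof -
  obtain a b c where t: "t = {a,b,c}" "a \<noteq> b" "b \<noteq> c" "a \<noteq> c"
    using assms unfolding is_triangle_def card_3_iff by blast
  then show ?thesis using assms unfolding is_triangle_def
    using collinear_3_eq_affine_dependent by metis
qed

lemma indep_vertex:
  assumes "\<not> affine_dependent t" "p \<in> t" "S \<subseteq> t" "p \<in> convex hull S"
  shows "p \<in> S"
proof (rule ccontr)
  assume "p \<notin> S"
  then have "S \<subseteq> t - {p}" using assms by auto
  then have "p \<in> affine hull (t - {p})"
    using assms(4) convex_hull_subset_affine_hull hull_mono by blast
  then show False using assms(1,2) unfolding affine_dependent_def by blast
qed

lemma indep_seg:
  fixes t :: "pt set"
  assumes "\<not> affine_dependent t" "u \<in> t" "v \<in> t" "z \<in> open_segment u v"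
    "S \<subseteq> t" "z \<in> convex hull S"
  shows "u \<in> S"
proof (rule ccontr)
  assume "u \<notin> S"
  then have S: "S \<subseteq> t - {u}" using assms by auto
  have uv: "u \<noteq> v" using assms(4) by (auto simp: in_segment)
  obtain s where s: "0 < s" "s < 1" "z = (1 - s) *\<^sub>R u + s *\<^sub>R v"
    using assms(4) by (auto simp: in_segment)
  have z: "z \<in> affine hull (t - {u})"
    using assms(6) S convex_hull_subset_affine_hull hull_mono by blast
  have v: "v \<in> affine hull (t - {u})" using assms(3) uv by (simp add: hull_inc)
  have cf: "\<And>zz uu vv::real. zz = (1 - s) * uu + s * vv \<Longrightarrow> uu = (1 / (1 - s)) * zz + (- s / (1 - s)) * vv"
  proof -
    fix zz uu vv :: real assume "zz = (1 - s) * uu + s * vv"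
    then have "uu * (1 - s) = zz - s * vv" by (simp add: algebra_simps)
    then have "uu = (zz - s * vv) / (1 - s)" using s(2) by (simp add: eq_divide_eq)
    then show "uu = (1 / (1 - s)) * zz + (- s / (1 - s)) * vv" by (simp add: diff_divide_distrib)
  qed
  have "u = (1/(1-s)) *\<^sub>R z + (- s/(1-s)) *\<^sub>R v"
    using s(3) cf by (simp add: prod_eq_iff)
  moreover have "(1/(1-s)) + (- s/(1-s)) = 1" using s by (simp add: divide_simps)
  then have "(1/(1-s)) *\<^sub>R z + (- s/(1-s)) *\<^sub>R v \<in> affine hull (t - {u})"
    by (rule mem_affine[OF affine_affine_hull z v])
  ultimately have "u \<in> affine hull (t - {u})" by simp
  then show False using assms(1,2) unfolding affine_dependent_def by blast
qed

lemma open_seg_hull: "z \<in> open_segment u v \<Longrightarrow> z \<in> convex hull {u, v}"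
  by (simp add: open_segment_def segment_convex_hull)

lemma tri_in_P: "triangulation P T \<Longrightarrow> t \<in> T \<Longrightarrow> t \<subseteq> P"
  unfolding triangulation_def by blast

lemma tri_is_tri: "triangulation P T \<Longrightarrow> t \<in> T \<Longrightarrow> is_triangle t"
  unfolding triangulation_def by blast

lemma tri_f2f: "triangulation P T \<Longrightarrow> t \<in> T \<Longrightarrow> t' \<in> T \<Longrightarrow>
   convex hull t \<inter> convex hull t' = convex hull (t \<inter> t')"
  unfolding triangulation_def by blast

lemma E1:
  assumes "triangulation P T" "t \<in> T" "p \<in> P" "p \<in> convex hull t"
  shows "p \<in> t"
proof -
  have "\<Union>T = P" using assms(1) unfolding triangulation_def by blast
  then obtain t' where t': "t' \<in> T" "p \<in> t'" using assms(3) by blast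
  have "p \<in> convex hull t'" using t'(2) by (simp add: hull_inc)
  then have "p \<in> convex hull (t' \<inter> t)" using tri_f2f[OF assms(1) t'(1) assms(2)] assms(4) by blast
  then have "p \<in> t' \<inter> t"
    using indep_vertex[OF tri_indep[OF tri_is_tri[OF assms(1) t'(1)]] t'(2)] by blast
  then show ?thesis by blast
qed

lemma E2:
  assumes "triangulation P T" "t \<in> T" "u \<in> t" "v \<in> t" "p \<in> P" "p \<in> open_segment u v"
  shows False
proof -
  have "convex hull {u, v} \<subseteq> convex hull t" using assms(3,4) by (simp add: hull_mono)
  then have "p \<in> convex hull t" using open_seg_hull[OF assms(6)] by blast
  then have pt: "p \<in> t" using E1[OF assms(1,2,5)] by blast
  have "p \<in> {u, v}"
    using indep_vertex[OF tri_indep[OF tri_is_tri[OF assms(1,2)]] pt _ open_seg_hull[OF assms(6)]] assms(3,4)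
    by blast
  then show False using assms(6) by (auto simp: open_segment_def)
qed

lemma B:
  assumes "triangulation P T" "e1 \<in> tri_edges T" "e2 \<in> tri_edges T" "crosses e1 e2"
  shows "e1 = e2"
proof -
  obtain a b c d where ab: "e1 = {a, b}" "e2 = {c, d}" "a \<noteq> b" "c \<noteq> d"
    and z: "open_segment a b \<inter> open_segment c d \<noteq> {}"
    using assms(4) unfolding crosses_def by blast
  obtain z where z1: "z \<in> open_segment a b" and z2: "z \<in> open_segment c d" using z by blast
  obtain t1 where t1: "t1 \<in> T" "e1 \<subseteq> t1" using assms(2) unfolding tri_edges_def by blast
  obtain t2 where t2: "t2 \<in> T" "e2 \<subseteq> t2" using assms(3) unfolding tri_edges_def by blast
  have i1: "\<not> affine_dependent t1" using tri_indep tri_is_tri assms(1) t1(1) by blast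
  have i2: "\<not> affine_dependent t2" using tri_indep tri_is_tri assms(1) t2(1) by blast
  have "z \<in> convex hull t1" using open_seg_hull[OF z1] t1(2) ab(1) hull_mono[of "{a,b}" t1] by blast
  moreover have "z \<in> convex hull t2" using open_seg_hull[OF z2] t2(2) ab(2) hull_mono[of "{c,d}" t2] by blast
  ultimately have zz: "z \<in> convex hull (t1 \<inter> t2)" using tri_f2f[OF assms(1) t1(1) t2(1)] by blast
  have "c \<in> t1 \<inter> t2" using indep_seg[OF i2 _ _ z2 _ zz] t2(2) ab(2) by blast
  moreover have "d \<in> t1 \<inter> t2" using indep_seg[OF i2 _ _ _ _ zz, of d c] z2 t2(2) ab(2)
    by (auto simp: open_segment_commute)
  ultimately have cd: "{c, d} \<subseteq> t1" by blast
  have "a \<in> {c, d}" using indep_seg[OF i1 _ _ z1 cd open_seg_hull[OF z2]] t1(2) ab(1) by blast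
  moreover have "b \<in> {c, d}" using indep_seg[OF i1 _ _ _ cd open_seg_hull[OF z2], of b a] z1 t1(2) ab(1)
    by (auto simp: open_segment_commute)
  ultimately show ?thesis using ab by auto
qed

lemma card2_le: "card {x, y} \<le> 2" by (cases "x = y") auto

lemma card3_distinct: assumes "card {a, b, c} = 3" shows "a \<noteq> b \<and> a \<noteq> c \<and> b \<noteq> c"
proof (intro conjI notI)
  assume "a = b" then have "{a, b, c} = {b, c}" by auto
  with assms card2_le[of b c] show False by simp
next
  assume "a = c" then have "{a, b, c} = {b, c}" by auto
  with assms card2_le[of b c] show False by simp
next
  assume "b = c" then have "{a, b, c} = {a, c}" by auto
  with assms card2_le[of a c] show False by simp
qed

lemma tri_distinct: assumes "is_triangle {a, b, c}" shows "a \<noteq> b \<and> a \<noteq> c \<and> b \<noteq> c"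
proof -
  have "card {a, b, c} = 3" using assms unfolding is_triangle_def by simp
  then show ?thesis by (rule card3_distinct)
qed

lemma det_zero_par:
  assumes "det2 u v = 0" "u \<noteq> 0" shows "\<exists>r. v = r *\<^sub>R u"
proof (cases "fst u = 0")
  case True
  then have su: "snd u \<noteq> 0" using assms(2) by (simp add: prod_eq_iff)
  have "fst v = 0" using assms(1) True su unfolding det2_def by simp
  then have "v = (snd v / snd u) *\<^sub>R u" using True su
    by (intro prod_eqI) simp_all
  then show ?thesis by blast
next
  case False
  have h: "fst u * snd v = snd u * fst v" using assms(1) unfolding det2_def by simp
  have "snd v = (fst u * snd v) / fst u" using False by simp
  also have "\<dots> = (snd u * fst v) / fst u" using h by simp
  also have "\<dots> = (fst v / fst u) * snd u" by simp
  finally have "snd v = (fst v / fst u) * snd u" .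
  then have "v = (fst v / fst u) *\<^sub>R u" using False
    by (intro prod_eqI) simp_all
  then show ?thesis by blast
qed

lemma noncol_det:
  assumes "is_triangle {a, b, c}" shows "det2 (b - a) (c - a) \<noteq> 0"
proof
  assume d: "det2 (b - a) (c - a) = 0"
  have ds: "a \<noteq> b" "a \<noteq> c" "b \<noteq> c" using tri_distinct[OF assms] by auto
  have "b - a \<noteq> 0" using ds(1) by auto
  then obtain r where r: "c - a = r *\<^sub>R (b - a)" using det_zero_par[OF d] by blast
  have r1: "fst c - fst a = r * (fst b - fst a)" using arg_cong[OF r, of fst] by simp
  have r2: "snd c - snd a = r * (snd b - snd a)" using arg_cong[OF r, of snd] by simp
  have c: "c = (1 - r) *\<^sub>R a + r *\<^sub>R b"
    by (intro prod_eqI) (use r1 r2 in \<open>simp_all add: algebra_simps\<close>)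
  have h: "(1 - r) *\<^sub>R a + r *\<^sub>R b \<in> affine hull {a, b}"
    by (rule mem_affine[OF affine_affine_hull]) (auto simp: hull_inc)
  have "c \<in> affine hull {a, b}" using h unfolding c[symmetric] .
  then have "collinear {a, b, c}" by (rule affine_hull_3_imp_collinear)
  then show False using assms unfolding is_triangle_def by blast
qed

lemma det2_lin: "det2 u (p *\<^sub>R v + q *\<^sub>R w) = p * det2 u v + q * det2 u w"
  unfolding det2_def by (simp add: algebra_simps)

lemma det2_self: "det2 u (r *\<^sub>R u) = 0"
  unfolding det2_def by (simp add: algebra_simps)

lemma OS:
  assumes T: "triangulation P T" and t1: "{a, b, c} \<in> T" and t2: "{a, b, x} \<in> T" and cx: "c \<noteq> x"
  shows "det2 (b - a) (c - a) * det2 (b - a) (x - a) < 0"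
proof (rule ccontr)
  define D1 where "D1 = det2 (b - a) (c - a)"
  define D2 where "D2 = det2 (b - a) (x - a)"
  have tr1: "is_triangle {a, b, c}" using tri_is_tri[OF T t1] .
  have tr2: "is_triangle {a, b, x}" using tri_is_tri[OF T t2] .
  have d1: "D1 \<noteq> 0" unfolding D1_def by (rule noncol_det[OF tr1])
  have d2: "D2 \<noteq> 0" unfolding D2_def by (rule noncol_det[OF tr2])
  assume "\<not> det2 (b - a) (c - a) * det2 (b - a) (x - a) < 0"
  then have "D1 * D2 \<ge> 0" unfolding D1_def D2_def by simp
  moreover have "D1 * D2 \<noteq> 0" using d1 d2 by simp
  ultimately have pos: "D1 * D2 > 0" by (metis less_le)
  define \<delta> where "\<delta> = D1 / D2"
  have dpos: "\<delta> > 0" unfolding \<delta>_def using pos by (simp add: zero_less_mult_iff zero_less_divide_iff)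
  define \<alpha> where "\<alpha> = det2 (c - a) (x - a) / D2"
  have h1: "D2 * (fst c - fst a) = det2 (c - a) (x - a) * (fst b - fst a) + D1 * (fst x - fst a)"
    unfolding D1_def D2_def det2_def by (simp add: algebra_simps)
  have h2: "D2 * (snd c - snd a) = det2 (c - a) (x - a) * (snd b - snd a) + D1 * (snd x - snd a)"
    unfolding D1_def D2_def det2_def by (simp add: algebra_simps)
  have hc1: "fst c = fst a + \<alpha> * (fst b - fst a) + \<delta> * (fst x - fst a)"
  proof -
    have e1: "D2 * \<alpha> = det2 (c - a) (x - a)" unfolding \<alpha>_def using d2 by simp
    have e2: "D2 * \<delta> = D1" unfolding \<delta>_def using d2 by simp
    have "D2 * (fst a + \<alpha> * (fst b - fst a) + \<delta> * (fst x - fst a))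
        = D2 * fst a + (D2 * \<alpha>) * (fst b - fst a) + (D2 * \<delta>) * (fst x - fst a)"
      by (simp add: algebra_simps)
    also have "\<dots> = D2 * fst a + det2 (c - a) (x - a) * (fst b - fst a) + D1 * (fst x - fst a)"
      unfolding e1 e2 ..
    also have "\<dots> = D2 * fst c" using h1 by (simp add: algebra_simps)
    finally show ?thesis using d2 by simp
  qed
  have hc2: "snd c = snd a + \<alpha> * (snd b - snd a) + \<delta> * (snd x - snd a)"
  proof -
    have e1: "D2 * \<alpha> = det2 (c - a) (x - a)" unfolding \<alpha>_def using d2 by simp
    have e2: "D2 * \<delta> = D1" unfolding \<delta>_def using d2 by simp
    have "D2 * (snd a + \<alpha> * (snd b - snd a) + \<delta> * (snd x - snd a))
        = D2 * snd a + (D2 * \<alpha>) * (snd b - snd a) + (D2 * \<delta>) * (snd x - snd a)"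
      by (simp add: algebra_simps)
    also have "\<dots> = D2 * snd a + det2 (c - a) (x - a) * (snd b - snd a) + D1 * (snd x - snd a)"
      unfolding e1 e2 ..
    also have "\<dots> = D2 * snd c" using h2 by (simp add: algebra_simps)
    finally show ?thesis using d2 by simp
  qed
  define \<gamma> where "\<gamma> = 1 / (4 * (1 + \<bar>\<alpha>\<bar> + \<delta>))"
  have den: "1 + \<bar>\<alpha>\<bar> + \<delta> > 0" using dpos by simp
  have gpos: "\<gamma> > 0" unfolding \<gamma>_def using den by simp
  have gs0: "\<gamma> * (1 + \<bar>\<alpha>\<bar> + \<delta>) = 1/4" unfolding \<gamma>_def using den by simp
  have gsum: "\<gamma> + \<gamma> * \<bar>\<alpha>\<bar> + \<gamma> * \<delta> = 1/4"
    using gs0 by (simp add: algebra_simps)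
  have nn1: "\<gamma> * \<bar>\<alpha>\<bar> \<ge> 0" "\<gamma> * \<delta> \<ge> 0" using gpos dpos by simp_all
  have ga: "\<gamma> * \<bar>\<alpha>\<bar> \<le> 1/4" "\<gamma> * \<delta> \<le> 1/4" "\<gamma> \<le> 1/4" using gsum nn1 gpos by linarith+
  have gal: "- (1/4) \<le> \<gamma> * \<alpha>" "\<gamma> * \<alpha> \<le> 1/4"
  proof -
    have "\<bar>\<gamma> * \<alpha>\<bar> \<le> 1/4" using ga(1) gpos by (simp add: abs_mult)
    then show "- (1/4) \<le> \<gamma> * \<alpha>" "\<gamma> * \<alpha> \<le> 1/4" by (simp_all add: abs_le_iff)
  qed
  define p where "p = (1/2 - \<gamma>) *\<^sub>R a + (1/2) *\<^sub>R b + \<gamma> *\<^sub>R c"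
  have "p \<in> convex hull {a, b, c}"
  proof -
    have "\<exists>u v w. p = u *\<^sub>R a + v *\<^sub>R b + w *\<^sub>R c \<and> 0 \<le> u \<and> 0 \<le> v \<and> 0 \<le> w \<and> u + v + w = 1"
      using ga gpos unfolding p_def by (intro exI[of _ "1/2 - \<gamma>"] exI[of _ "1/2"] exI[of _ \<gamma>]) simp
    then show ?thesis unfolding convex_hull_3 by blast
  qed
  moreover have "p \<in> convex hull {a, b, x}"
  proof -
    have "p = (1/2 - \<gamma> * \<alpha> - \<gamma> * \<delta>) *\<^sub>R a + (1/2 + \<gamma> * \<alpha>) *\<^sub>R b + (\<gamma> * \<delta>) *\<^sub>R x"
      unfolding p_def by (intro prod_eqI) (simp_all add: hc1 hc2 algebra_simps)
    moreover have "0 \<le> 1/2 - \<gamma> * \<alpha> - \<gamma> * \<delta>" "0 \<le> 1/2 + \<gamma> * \<alpha>" "0 \<le> \<gamma> * \<delta>"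
      using gal ga nn1 by linarith+
    ultimately have "\<exists>u v w. p = u *\<^sub>R a + v *\<^sub>R b + w *\<^sub>R x \<and> 0 \<le> u \<and> 0 \<le> v \<and> 0 \<le> w \<and> u + v + w = 1"
      by (intro exI[of _ "1/2 - \<gamma> * \<alpha> - \<gamma> * \<delta>"] exI[of _ "1/2 + \<gamma> * \<alpha>"] exI[of _ "\<gamma> * \<delta>"]) simp
    then show ?thesis unfolding convex_hull_3 by blast
  qed
  ultimately have "p \<in> convex hull ({a, b, c} \<inter> {a, b, x})" using tri_f2f[OF T t1 t2] by blast
  moreover have "{a, b, c} \<inter> {a, b, x} = {a, b}"
    using tri_distinct[OF tr1] tri_distinct[OF tr2] cx by auto
  ultimately have "p \<in> closed_segment a b" by (simp add: segment_convex_hull)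
  then obtain t where pt: "p = (1 - t) *\<^sub>R a + t *\<^sub>R b" by (auto simp: in_segment)
  have "det2 (b - a) (p - a) = 0" unfolding pt det2_def by (simp add: algebra_simps)
  moreover have "det2 (b - a) (p - a) = \<gamma> * D1" unfolding p_def D1_def det2_def by (simp add: algebra_simps) (simp add: field_simps)
  ultimately show False using gpos d1 by simp
qed

lemma no_third:
  assumes T: "triangulation P T" and "{a, b, c} \<in> T" "{a, b, d} \<in> T" "{a, b, x} \<in> T"
    and "c \<noteq> d" "x \<noteq> c" "x \<noteq> d"
  shows False
proof -
  define A B C where "A = det2 (b - a) (c - a)" "B = det2 (b - a) (d - a)" "C = det2 (b - a) (x - a)"
  have 1: "A * B < 0" unfolding A_B_C_def using OS[OF T assms(2,3,5)] .
  have 2: "A * C < 0" unfolding A_B_C_def using OS[OF T assms(2,4)] assms(6) by auto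
  have 3: "B * C < 0" unfolding A_B_C_def using OS[OF T assms(3,4)] assms(7) by auto
  have "(A * B) * (A * C) > 0" using 1 2 by (simp add: mult_neg_neg)
  then have "(A * B) * (A * C) * (B * C) < 0" using 3 by (simp add: mult_pos_neg)
  moreover have "(A * B) * (A * C) * (B * C) = (A * B * C)^2" by (simp add: power2_eq_square algebra_simps)
  ultimately show False by (metis not_less zero_le_power2)
qed

lemma solve3:
  fixes k y p u q v r z :: real
  assumes "k \<noteq> 0" "k * y = p * u + q * v + r * z"
  shows "y = (p / k) * u + (q / k) * v + (r / k) * z"
proof -
  have "y = (k * y) / k" using assms(1) by simp
  also have "\<dots> = (p * u + q * v + r * z) / k" using assms(2) by simp
  also have "\<dots> = (p / k) * u + (q / k) * v + (r / k) * z" by (simp add: add_divide_distrib)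
  finally show ?thesis .
qed

lemma diag_cross:
  assumes T: "triangulation P T" and t1: "{a, b, c} \<in> T" and t2: "{a, b, d} \<in> T"
    and cd: "c \<noteq> d" and q: "convex_quad a b c d"
  shows "\<exists>w. w \<in> open_segment a b \<and> w \<in> open_segment c d"
proof -
  define Dc where "Dc = det2 (b - a) (c - a)"
  define Dd where "Dd = det2 (b - a) (d - a)"
  have prod: "Dc * Dd < 0" unfolding Dc_def Dd_def by (rule OS[OF T t1 t2 cd])
  have sg: "(Dc > 0 \<and> Dd < 0) \<or> (Dc < 0 \<and> Dd > 0)" using prod by (auto simp: mult_less_0_iff)
  define s where "s = Dc / (Dc - Dd)"
  have nz: "Dc - Dd \<noteq> 0" using sg by auto
  have s0: "0 < s" using sg unfolding s_def by (auto simp: zero_less_divide_iff)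
  have s1: "s < 1" using sg unfolding s_def by (auto simp: divide_less_eq)
  have ds1: "a \<noteq> b" "a \<noteq> c" "b \<noteq> c" using tri_distinct[OF tri_is_tri[OF T t1]] by auto
  have ds2: "a \<noteq> d" "b \<noteq> d" using tri_distinct[OF tri_is_tri[OF T t2]] by auto
  define w where "w = (1 - s) *\<^sub>R c + s *\<^sub>R d"
  have "det2 (b - a) (w - a) = (1 - s) * Dc + s * Dd"
    unfolding w_def Dc_def Dd_def det2_def by (simp add: algebra_simps)
  also have "\<dots> = 0" unfolding s_def using nz by (simp add: field_simps)
  finally have dw: "det2 (b - a) (w - a) = 0" .
  have "b - a \<noteq> 0" using ds1 by auto
  then obtain r where r: "w - a = r *\<^sub>R (b - a)" using det_zero_par[OF dw] by blast
  have r1: "fst w = (1 - r) * fst a + r * fst b" using arg_cong[OF r, of fst] by (simp add: algebra_simps)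
  have r2: "snd w = (1 - r) * snd a + r * snd b" using arg_cong[OF r, of snd] by (simp add: algebra_simps)
  have w1: "fst w = (1 - s) * fst c + s * fst d" unfolding w_def by simp
  have w2: "snd w = (1 - s) * snd c + s * snd d" unfolding w_def by simp
  have r0: "0 < r"
  proof (rule ccontr)
    assume "\<not> 0 < r"
    then have rl: "r \<le> 0" by simp
    have k: "1 - r \<noteq> 0" using rl by simp
    have "fst a = (- r / (1 - r)) * fst b + ((1 - s) / (1 - r)) * fst c + (s / (1 - r)) * fst d"
      by (rule solve3[OF k]) (use r1 w1 in \<open>simp add: algebra_simps\<close>)
    moreover have "snd a = (- r / (1 - r)) * snd b + ((1 - s) / (1 - r)) * snd c + (s / (1 - r)) * snd d"
      by (rule solve3[OF k]) (use r2 w2 in \<open>simp add: algebra_simps\<close>)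
    ultimately have ae: "a = (- r / (1 - r)) *\<^sub>R b + ((1 - s) / (1 - r)) *\<^sub>R c + (s / (1 - r)) *\<^sub>R d"
      by (intro prod_eqI) simp_all
    have "- r / (1 - r) + (1 - s) / (1 - r) + s / (1 - r) = (- r + (1 - s) + s) / (1 - r)"
      by (simp only: add_divide_distrib)
    also have "\<dots> = 1" using k by simp
    finally have sum: "- r / (1 - r) + (1 - s) / (1 - r) + s / (1 - r) = 1" .
    have nn: "0 \<le> - r / (1 - r)" "0 \<le> (1 - s) / (1 - r)" "0 \<le> s / (1 - r)"
      using rl s0 s1 by (simp_all add: zero_le_divide_iff divide_le_0_iff)
    have "\<exists>u v w. a = u *\<^sub>R b + v *\<^sub>R c + w *\<^sub>R d \<and> 0 \<le> u \<and> 0 \<le> v \<and> 0 \<le> w \<and> u + v + w = 1"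
      using ae sum nn by blast
    then have "a \<in> convex hull {b, c, d}" unfolding convex_hull_3 by blast
    moreover have "{a, b, c, d} - {a} = {b, c, d}" using ds1 ds2 by auto
    ultimately show False using q unfolding convex_quad_def by auto
  qed
  have r1': "r < 1"
  proof (rule ccontr)
    assume "\<not> r < 1"
    then have rl: "r \<ge> 1" by simp
    have k: "r \<noteq> 0" using rl by simp
    have "fst b = ((r - 1) / r) * fst a + ((1 - s) / r) * fst c + (s / r) * fst d"
      by (rule solve3[OF k]) (use r1 w1 in \<open>simp add: algebra_simps\<close>)
    moreover have "snd b = ((r - 1) / r) * snd a + ((1 - s) / r) * snd c + (s / r) * snd d"
      by (rule solve3[OF k]) (use r2 w2 in \<open>simp add: algebra_simps\<close>)
    ultimately have be: "b = ((r - 1) / r) *\<^sub>R a + ((1 - s) / r) *\<^sub>R c + (s / r) *\<^sub>R d"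
      by (intro prod_eqI) simp_all
    have "(r - 1) / r + (1 - s) / r + s / r = ((r - 1) + (1 - s) + s) / r"
      by (simp only: add_divide_distrib)
    also have "\<dots> = 1" using k by simp
    finally have sum: "(r - 1) / r + (1 - s) / r + s / r = 1" .
    have nn: "0 \<le> (r - 1) / r" "0 \<le> (1 - s) / r" "0 \<le> s / r"
      using rl s0 s1 by (simp_all add: zero_le_divide_iff divide_le_0_iff)
    have "\<exists>u v w. b = u *\<^sub>R a + v *\<^sub>R c + w *\<^sub>R d \<and> 0 \<le> u \<and> 0 \<le> v \<and> 0 \<le> w \<and> u + v + w = 1"
      using be sum nn by blast
    then have "b \<in> convex hull {a, c, d}" unfolding convex_hull_3 by blast
    moreover have "{a, b, c, d} - {b} = {a, c, d}" using ds1 ds2 by auto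
    ultimately show False using q unfolding convex_quad_def by auto
  qed
  have "w = (1 - r) *\<^sub>R a + r *\<^sub>R b" using r1 r2 by (intro prod_eqI) simp_all
  then have "w \<in> open_segment a b" using r0 r1' ds1(1) by (auto simp: in_segment)
  moreover have "w \<in> open_segment c d" using s0 s1 cd unfolding w_def by (auto simp: in_segment)
  ultimately show ?thesis by blast
qed

lemma seg_open:
  fixes x y z w :: pt
  assumes "z \<in> open_segment x y" "w \<in> closed_segment z x" "w \<noteq> x"
  shows "w \<in> open_segment x y"
proof -
  obtain s where s: "0 < s" "s < 1" "z = (1 - s) *\<^sub>R x + s *\<^sub>R y" and xy: "x \<noteq> y"
    using assms(1) by (auto simp: in_segment)
  obtain r where r: "0 \<le> r" "r \<le> 1" "w = (1 - r) *\<^sub>R z + r *\<^sub>R x"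
    using assms(2) by (auto simp: in_segment)
  have "r \<noteq> 1" using r(3) assms(3) by auto
  then have r1: "r < 1" using r(2) by simp
  have "w = (1 - (1 - r) * s) *\<^sub>R x + ((1 - r) * s) *\<^sub>R y"
    unfolding r(3) s(3) by (intro prod_eqI) (simp_all add: algebra_simps)
  moreover have "0 < (1 - r) * s" using r1 s by simp
  moreover have "(1 - r) * s \<le> s" using r s by (simp add: mult_left_le_one_le)
  then have "(1 - r) * s < 1" using s by linarith
  ultimately show ?thesis using xy by (auto simp: in_segment)
qed

lemma crossesI:
  assumes "a \<noteq> b" "c \<noteq> d" "w \<in> open_segment a b" "w \<in> open_segment c d"
  shows "crosses {a, b} {c, d}"
  unfolding crosses_def using assms
  by (intro exI[of _ a] exI[of _ b] exI[of _ c] exI[of _ d]) auto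

lemma crosses_sym: "crosses e1 e2 \<Longrightarrow> crosses e2 e1"
  unfolding crosses_def by blast

lemma exit_one:
  fixes a b c x y z :: pt
  assumes T: "triangulation P T" and t: "{a, b, c} \<in> T"
    and noP: "\<forall>p\<in>P. p \<notin> open_segment x y"
    and z: "z \<in> convex hull {a, b, c}" and zs: "z \<in> open_segment x y"
    and xo: "x \<notin> convex hull {a, b, c}"
  shows "\<exists>g\<in>{{a, b}, {b, c}, {a, c}}. crosses g {x, y}"
proof -
  define K where "K = convex hull {a, b, c}"
  have ds: "a \<noteq> b" "a \<noteq> c" "b \<noteq> c" using tri_distinct[OF tri_is_tri[OF T t]] by auto
  have Ps: "a \<in> P" "b \<in> P" "c \<in> P" using tri_in_P[OF T t] by auto
  have xy: "x \<noteq> y" using zs by (auto simp: in_segment)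
  have "closed_segment z x \<inter> frontier K \<noteq> {}"
  proof (rule connected_Int_frontier)
    show "connected (closed_segment z x)" by simp
    show "closed_segment z x \<inter> K \<noteq> {}" using z unfolding K_def by blast
    show "closed_segment z x - K \<noteq> {}" using xo unfolding K_def by blast
  qed
  then obtain w where w1: "w \<in> closed_segment z x" and w2: "w \<in> frontier K" by blast
  have "closed K" unfolding K_def by (rule compact_imp_closed[OF finite_imp_compact_convex_hull]) simp
  then have "w \<in> K" using w2 frontier_subset_closed by blast
  then have "w \<noteq> x" using xo unfolding K_def by blast
  then have wo: "w \<in> open_segment x y" using seg_open[OF zs w1] by blast
  have dim: "DIM(real \<times> real) = 2" by simp
  have "w \<in> closed_segment a b \<union> closed_segment b c \<union> closed_segment c a"
    using w2 unfolding K_def frontier_of_triangle[OF dim] .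
  moreover have "w \<noteq> a" "w \<noteq> b" "w \<noteq> c" using noP wo Ps by auto
  ultimately have "w \<in> open_segment a b \<or> w \<in> open_segment b c \<or> w \<in> open_segment a c"
    by (auto simp: open_segment_def closed_segment_commute[of c a])
  then show ?thesis
    using crossesI[OF ds(1) xy _ wo] crossesI[OF ds(3) xy _ wo] crossesI[OF ds(2) xy _ wo] by blast
qed

lemma exit_tri:
  fixes a b c x y z :: pt
  assumes T: "triangulation P T" and t: "{a, b, c} \<in> T"
    and T': "triangulation P T'" and e: "{x, y} \<in> tri_edges T'"
    and z: "z \<in> convex hull {a, b, c}" and zs: "z \<in> open_segment x y"
  shows "\<exists>g\<in>{{a, b}, {b, c}, {a, c}}. crosses g {x, y}"
proof -
  obtain t2 where t2: "t2 \<in> T'" "{x, y} \<subseteq> t2" using e unfolding tri_edges_def by blast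
  have xy: "x \<noteq> y" using zs by (auto simp: in_segment)
  have Pxy: "x \<in> P" "y \<in> P" using tri_in_P[OF T' t2(1)] t2(2) by auto
  have noP: "\<forall>p\<in>P. p \<notin> open_segment x y"
    using E2[OF T' t2(1)] t2(2) by blast
  show ?thesis
  proof (cases "x \<in> convex hull {a, b, c}")
    case xin: True
    show ?thesis
    proof (cases "y \<in> convex hull {a, b, c}")
      case True
      have "x \<in> {a, b, c}" "y \<in> {a, b, c}" using E1[OF T t] Pxy xin True by auto
      then have "{x, y} \<in> {{a, b}, {b, c}, {a, c}}" using xy by auto
      moreover have "crosses {x, y} {x, y}" using crossesI[OF xy xy zs zs] .
      ultimately show ?thesis by blast
    next
      case False
      have "\<exists>g\<in>{{a, b}, {b, c}, {a, c}}. crosses g {y, x}"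
        by (rule exit_one[OF T t _ z _ False]) (use noP zs in \<open>auto simp: open_segment_commute\<close>)
      then show ?thesis by (simp add: insert_commute)
    qed
  next
    case False
    show ?thesis by (rule exit_one[OF T t noP z zs False])
  qed
qed

lemma exit_quad:
  assumes T: "triangulation P T" and t1: "{a, b, c} \<in> T" and t2: "{a, b, d} \<in> T"
    and q: "convex_quad a b c d"
    and T': "triangulation P T'" and e: "e \<in> tri_edges T'" and cr: "crosses {c, d} e"
  shows "\<exists>g\<in>{{a, b}, {a, c}, {b, c}, {a, d}, {b, d}}. crosses g e"
proof -
  obtain c' d' x y where cd: "{c, d} = {c', d'}" "e = {x, y}" "c' \<noteq> d'" "x \<noteq> y"
    and z: "open_segment c' d' \<inter> open_segment x y \<noteq> {}"
    using cr unfolding crosses_def by blast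
  obtain z where z1: "z \<in> open_segment c' d'" and z2: "z \<in> open_segment x y" using z by blast
  have "z \<in> convex hull {c, d}" using open_seg_hull[OF z1] cd(1) by simp
  moreover have "convex hull {c, d} \<subseteq> convex hull {a, b, c} \<union> convex hull {a, b, d}"
    using q unfolding convex_quad_def by (intro hull_minimal) (auto simp: hull_inc)
  ultimately have "z \<in> convex hull {a, b, c} \<or> z \<in> convex hull {a, b, d}" by blast
  moreover have ee: "{x, y} \<in> tri_edges T'" using e cd(2) by simp
  ultimately show ?thesis
    using exit_tri[OF T t1 T' ee _ z2] exit_tri[OF T t2 T' ee _ z2] cd(2) by blast
qed

lemma card2_sub3:
  assumes "card g = 2" "g \<subseteq> {p, q, r}"
  shows "g = {p, q} \<or> g = {p, r} \<or> g = {q, r}"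
proof -
  obtain x y where g: "g = {x, y}" "x \<noteq> y" using assms(1) by (auto simp: card_2_iff)
  have "x \<in> {p, q, r}" "y \<in> {p, q, r}" using assms(2) g by auto
  then show ?thesis using g(2) unfolding g(1) by auto
qed

lemma edgeI: "x \<noteq> y \<Longrightarrow> t \<in> T \<Longrightarrow> {x, y} \<subseteq> t \<Longrightarrow> {x, y} \<in> tri_edges T"
  unfolding tri_edges_def by auto

lemma flip_edges:
  assumes T: "triangulation P T" and t1: "{a, b, c} \<in> T" and t2: "{a, b, d} \<in> T" and cd: "c \<noteq> d"
    and T': "T' = (T - {{a, b, c}, {a, b, d}}) \<union> {{a, c, d}, {b, c, d}}"
  shows "tri_edges T' \<subseteq> tri_edges T \<union> {{c, d}}"
    and "tri_edges T - {{a, b}} \<subseteq> tri_edges T'"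
    and "{a, b} \<notin> tri_edges T'"
    and "{a, b} \<in> tri_edges T"
    and "{c, d} \<in> tri_edges T'"
proof -
  have ds1: "a \<noteq> b" "a \<noteq> c" "b \<noteq> c" using tri_distinct[OF tri_is_tri[OF T t1]] by auto
  have ds2: "a \<noteq> d" "b \<noteq> d" using tri_distinct[OF tri_is_tri[OF T t2]] by auto
  have n1: "{a, c, d} \<in> T'" "{b, c, d} \<in> T'" using T' by auto
  show "tri_edges T' \<subseteq> tri_edges T \<union> {{c, d}}"
  proof
    fix g assume "g \<in> tri_edges T'"
    then obtain s where g: "card g = 2" "s \<in> T'" "g \<subseteq> s" unfolding tri_edges_def by blast
    show "g \<in> tri_edges T \<union> {{c, d}}"
    proof (cases "s \<in> T")
      case True then show ?thesis using g unfolding tri_edges_def by blast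
    next
      case False
      then have "s = {a, c, d} \<or> s = {b, c, d}" using g(2) T' by auto
      then show ?thesis
      proof
        assume s: "s = {a, c, d}"
        have "g = {a, c} \<or> g = {a, d} \<or> g = {c, d}" using card2_sub3[OF g(1)] g(3) s by blast
        then show ?thesis using edgeI[OF ds1(2) t1] edgeI[OF ds2(1) t2] by auto
      next
        assume s: "s = {b, c, d}"
        have "g = {b, c} \<or> g = {b, d} \<or> g = {c, d}" using card2_sub3[OF g(1)] g(3) s by blast
        then show ?thesis using edgeI[OF ds1(3) t1] edgeI[OF ds2(2) t2] by auto
      qed
    qed
  qed
  show "tri_edges T - {{a, b}} \<subseteq> tri_edges T'"
  proof
    fix g assume "g \<in> tri_edges T - {{a, b}}"
    then obtain s where g: "card g = 2" "s \<in> T" "g \<subseteq> s" and gab: "g \<noteq> {a, b}"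
      unfolding tri_edges_def by blast
    show "g \<in> tri_edges T'"
    proof (cases "s = {a, b, c} \<or> s = {a, b, d}")
      case False
      then have "s \<in> T'" using g(2) T' by auto
      then show ?thesis using g unfolding tri_edges_def by blast
    next
      case True
      then show ?thesis
      proof
        assume s: "s = {a, b, c}"
        have "g = {a, c} \<or> g = {b, c}" using card2_sub3[OF g(1)] g(3) s gab by blast
        then show ?thesis using edgeI[OF ds1(2) n1(1)] edgeI[OF ds1(3) n1(2)] by auto
      next
        assume s: "s = {a, b, d}"
        have "g = {a, d} \<or> g = {b, d}" using card2_sub3[OF g(1)] g(3) s gab by blast
        then show ?thesis using edgeI[OF ds2(1) n1(1)] edgeI[OF ds2(2) n1(2)] by auto
      qed
    qed
  qed
  show "{a, b} \<notin> tri_edges T'"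
  proof
    assume "{a, b} \<in> tri_edges T'"
    then obtain s where s: "s \<in> T'" "{a, b} \<subseteq> s" unfolding tri_edges_def by blast
    have "s \<noteq> {a, c, d}" using s(2) ds1 ds2 by auto
    moreover have "s \<noteq> {b, c, d}" using s(2) ds1 ds2 by auto
    ultimately have sT: "s \<in> T" "s \<noteq> {a, b, c}" "s \<noteq> {a, b, d}" using s(1) T' by auto
    have "card s = 3" using tri_is_tri[OF T sT(1)] unfolding is_triangle_def by simp
    moreover have "card {a, b} = 2" using ds1(1) by simp
    ultimately have "card (s - {a, b}) = 1" using s(2) by (simp add: card_Diff_subset)
    then obtain x where x: "s - {a, b} = {x}" by (rule card_1_singletonE)
    have sx: "s = {a, b, x}" using x s(2) by auto
    have "x \<noteq> c" using sT(2) sx by auto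
    moreover have "x \<noteq> d" using sT(3) sx by auto
    ultimately show False using no_third[OF T t1 t2, of x] sT(1) sx cd by auto
  qed
  show "{a, b} \<in> tri_edges T" using edgeI[OF ds1(1) t1] by auto
  show "{c, d} \<in> tri_edges T'" using edgeI[OF cd n1(1)] by auto
qed

locale fseq =
  fixes P :: "pt set" and k :: nat and F :: "nat \<Rightarrow> pt set \<times> pt set" and Ts :: "nat \<Rightarrow> pt set set"
  assumes steps: "\<forall>j\<in>{1..k}. flip_step P (Ts (j - 1)) (eps F j) (phi F j) (Ts j)"
    and trk: "triangulation P (Ts k)"
begin

abbreviation E where "E m \<equiv> tri_edges (Ts m)"

lemma step: "1 \<le> m \<Longrightarrow> m \<le> k \<Longrightarrow> flip_step P (Ts (m - 1)) (eps F m) (phi F m) (Ts m)"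
  using steps by auto

lemma tri: "m \<le> k \<Longrightarrow> triangulation P (Ts m)"
proof (cases "m = k")
  case True then show ?thesis using trk by simp
next
  case False
  assume "m \<le> k"
  then have "flip_step P (Ts (Suc m - 1)) (eps F (Suc m)) (phi F (Suc m)) (Ts (Suc m))"
    using False by (intro step) auto
  then show ?thesis unfolding flip_step_def by simp
qed

lemma fdata:
  assumes "1 \<le> m" "m \<le> k"
  obtains a b c d where "eps F m = {a, b}" "phi F m = {c, d}" "a \<noteq> b" "c \<noteq> d"
    "{a, b, c} \<in> Ts (m - 1)" "{a, b, d} \<in> Ts (m - 1)" "convex_quad a b c d"
    "Ts m = (Ts (m - 1) - {{a, b, c}, {a, b, d}}) \<union> {{a, c, d}, {b, c, d}}"
proof -
  have "\<exists>a b c d. eps F m = {a, b} \<and> phi F m = {c, d} \<and> a \<noteq> b \<and> c \<noteq> d \<and>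
        {a, b, c} \<in> Ts (m - 1) \<and> {a, b, d} \<in> Ts (m - 1) \<and> convex_quad a b c d \<and>
        Ts m = (Ts (m - 1) - {{a, b, c}, {a, b, d}}) \<union> {{a, c, d}, {b, c, d}}"
    using step[OF assms] unfolding flip_step_def by (rule conjunct2)
  then obtain a b c d where H: "eps F m = {a, b} \<and> phi F m = {c, d} \<and> a \<noteq> b \<and> c \<noteq> d \<and>
        {a, b, c} \<in> Ts (m - 1) \<and> {a, b, d} \<in> Ts (m - 1) \<and> convex_quad a b c d \<and>
        Ts m = (Ts (m - 1) - {{a, b, c}, {a, b, d}}) \<union> {{a, c, d}, {b, c, d}}"
    by (elim exE)
  show ?thesis
    apply (rule that)
    using H by simp_all
qed

lemma Fs:
  assumes "1 \<le> m" "m \<le> k"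
  shows "E m \<subseteq> E (m - 1) \<union> {phi F m}" "E (m - 1) - {eps F m} \<subseteq> E m"
    "eps F m \<notin> E m" "eps F m \<in> E (m - 1)" "phi F m \<in> E m"
proof -
  obtain a b c d where d: "eps F m = {a, b}" "phi F m = {c, d}" "a \<noteq> b" "c \<noteq> d"
    "{a, b, c} \<in> Ts (m - 1)" "{a, b, d} \<in> Ts (m - 1)" "convex_quad a b c d"
    "Ts m = (Ts (m - 1) - {{a, b, c}, {a, b, d}}) \<union> {{a, c, d}, {b, c, d}}"
    using fdata[OF assms] by blast
  have T: "triangulation P (Ts (m - 1))" using tri assms by simp
  note fe = flip_edges[OF T d(5) d(6) d(4) d(8)]
  show "E m \<subseteq> E (m - 1) \<union> {phi F m}" "E (m - 1) - {eps F m} \<subseteq> E m"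
    "eps F m \<notin> E m" "eps F m \<in> E (m - 1)" "phi F m \<in> E m"
    using fe unfolding d(1,2) by auto
qed

lemma persist:
  assumes "e \<in> E b" "b \<le> k" "\<forall>p. r < p \<and> p \<le> b \<longrightarrow> phi F p \<noteq> e" "r \<le> m" "m \<le> b"
  shows "e \<in> E m"
  using assms(4,5)
proof (induction "b - m" arbitrary: m)
  case 0 then show ?case using assms(1) by simp
next
  case (Suc n)
  have "n = b - Suc m" "r \<le> Suc m" "Suc m \<le> b" using Suc.hyps(2) Suc.prems by arith+
  then have "e \<in> E (Suc m)" by (rule Suc.hyps(1))
  moreover have "phi F (Suc m) \<noteq> e" using assms(3) Suc.prems Suc.hyps(2) by simp
  moreover have "E (Suc m) \<subseteq> E m \<union> {phi F (Suc m)}"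
    using Fs(1)[of "Suc m"] Suc.prems assms(2) Suc.hyps(2) by simp
  ultimately show ?case by blast
qed

lemma noflip:
  assumes "e \<in> E b" "b \<le> k" "\<forall>p. r < p \<and> p \<le> b \<longrightarrow> phi F p \<noteq> e" "r < p" "p \<le> b"
  shows "eps F p \<noteq> e"
proof
  assume "eps F p = e"
  moreover have "e \<in> E p" using persist[OF assms(1,2,3)] assms(4,5) by simp
  ultimately show False using Fs(3)[of p] assms by simp
qed

lemma last_creation:
  assumes "a < b" "b \<le> k" "e \<notin> E a" "e \<in> E b"
  obtains r where "a < r" "r \<le> b" "phi F r = e" "\<forall>p. r < p \<and> p \<le> b \<longrightarrow> eps F p \<noteq> e"
proof -
  define R where "R = {r. a < r \<and> r \<le> b \<and> phi F r = e}"
  have fin: "finite R" unfolding R_def by simp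
  have ne: "R \<noteq> {}"
  proof
    assume "R = {}"
    then have "\<forall>p. a < p \<and> p \<le> b \<longrightarrow> phi F p \<noteq> e" unfolding R_def by blast
    then have "e \<in> E a" using persist[OF assms(4,2)] assms(1) by simp
    then show False using assms(3) by simp
  qed
  define r where "r = Max R"
  have r: "r \<in> R" unfolding r_def using fin ne by simp
  have "\<forall>p. r < p \<and> p \<le> b \<longrightarrow> phi F p \<noteq> e"
  proof (intro allI impI)
    fix p assume p: "r < p \<and> p \<le> b"
    show "phi F p \<noteq> e"
    proof
      assume "phi F p = e"
      then have "p \<in> R" using p r unfolding R_def by simp
      then have "p \<le> r" unfolding r_def using fin by simp
      then show False using p by simp
    qed
  qed
  then have "\<forall>p. r < p \<and> p \<le> b \<longrightarrow> eps F p \<noteq> e"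
    using noflip[OF assms(4,2)] by blast
  then show ?thesis using that r unfolding R_def by blast
qed

lemma arcI:
  assumes "1 \<le> r" "r < h" "h \<le> k" "phi F r = eps F h \<or> share_tri (Ts (h - 1)) (phi F r) (eps F h)"
    "\<forall>p. r < p \<and> p < h \<longrightarrow> eps F p \<noteq> phi F r"
  shows "(r, h) \<in> dag_arcs k F Ts"
  using assms unfolding dag_arcs_def adjacent_def by auto

end

context fseq begin

abbreviation Rr where "Rr \<equiv> (dag_arcs k F Ts)\<^sup>+"

lemma lc:
  assumes "a < b" "b \<le> k" "e \<notin> E a" "e \<in> E b"
  shows "\<exists>r. a < r \<and> r \<le> b \<and> phi F r = e \<and> (\<forall>p. r < p \<and> p \<le> b \<longrightarrow> eps F p \<noteq> e)"
  by (rule last_creation[OF assms]) blast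

lemma main:
  assumes "h - i = n" "1 \<le> i" "i < h" "h \<le> k"
    "crosses (phi F h) (eps F i) \<or> phi F h = eps F i \<or> eps F i = eps F h \<or>
     phi F i = eps F h \<or> (\<exists>j. i \<le> j \<and> j < h \<and> share_tri (Ts j) (phi F i) (eps F h))"
  shows "(i, h) \<in> Rr"
  using assms
proof (induction n arbitrary: i h rule: less_induct)
  case (less n i h)
  have hi: "1 \<le> i" "i < h" "h \<le> k" using less.prems by auto
  have IH: "(i', h') \<in> Rr"
    if a: "h' - i' < h - i" "1 \<le> i'" "i' < h'" "h' \<le> k"
      "crosses (phi F h') (eps F i') \<or> phi F h' = eps F i' \<or> eps F i' = eps F h' \<or>
       phi F i' = eps F h' \<or> (\<exists>j. i' \<le> j \<and> j < h' \<and> share_tri (Ts j) (phi F i') (eps F h'))"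
    for i' h'
    using less.IH[OF _ refl a(2) a(3) a(4) a(5)] a(1) less.prems(1) by simp
  have IH1: "(i', h') \<in> Rr" if "h' - i' < h - i" "1 \<le> i'" "i' < h'" "h' \<le> k"
    "crosses (phi F h') (eps F i')" for i' h'
    using that by (intro IH) auto
  have IH2: "(i', h') \<in> Rr" if "h' - i' < h - i" "1 \<le> i'" "i' < h'" "h' \<le> k"
    "phi F h' = eps F i'" for i' h'
    using that by (intro IH) auto
  have IH3: "(i', h') \<in> Rr" if "h' - i' < h - i" "1 \<le> i'" "i' < h'" "h' \<le> k"
    "eps F i' = eps F h'" for i' h'
    using that by (intro IH) auto
  have IH4: "(i', h') \<in> Rr" if "h' - i' < h - i" "1 \<le> i'" "i' < h'" "h' \<le> k"
    "share_tri (Ts h'') (phi F i') (eps F h')" "i' \<le> h''" "h'' < h'" for i' h' h''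
    using that by (intro IH) auto
  have hh: "1 \<le> h" "h \<le> k" using hi by auto
  have Ti: "triangulation P (Ts (i - 1))" using tri hi by simp
  have Th: "triangulation P (Ts (h - 1))" using tri hi by simp
  have Th': "triangulation P (Ts h)" using tri hi by simp

  have C2: "(i, h) \<in> Rr" if eq: "phi F h = eps F i"
  proof -
    obtain a b c d where d: "eps F h = {a, b}" "phi F h = {c, d}" "a \<noteq> b" "c \<noteq> d"
      "{a, b, c} \<in> Ts (h - 1)" "{a, b, d} \<in> Ts (h - 1)" "convex_quad a b c d"
      "Ts h = (Ts (h - 1) - {{a, b, c}, {a, b, d}}) \<union> {{a, c, d}, {b, c, d}}"
      by (rule fdata[OF hh])
    obtain w where w: "w \<in> open_segment a b" "w \<in> open_segment c d"
      using diag_cross[OF Th d(5) d(6) d(4) d(7)] by blast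
    have cr: "crosses {a, b} {c, d}" using crossesI[OF d(3) d(4) w] .
    have ds: "c \<noteq> a" "c \<noteq> b" using tri_distinct[OF tri_is_tri[OF Th d(5)]] by auto
    have e1: "{c, d} \<in> E (i - 1)" using Fs(4)[of i] hi eq d(2) by simp
    have e2: "{a, b} \<notin> E (i - 1)"
    proof
      assume "{a, b} \<in> E (i - 1)"
      then have "{a, b} = {c, d}" using B[OF Ti _ e1 cr] by simp
      then show False using ds by auto
    qed
    have e3: "{a, b} \<in> E (h - 1)" using Fs(4)[of h] hi d(1) by simp
    obtain r where r: "i - 1 < r" "r \<le> h - 1" "phi F r = {a, b}"
      "\<forall>p. r < p \<and> p \<le> h - 1 \<longrightarrow> eps F p \<noteq> {a, b}"
    proof -
      have "i - 1 < h - 1" "h - 1 \<le> k" using hi by auto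
      from lc[OF this e2 e3] show ?thesis using that by blast
    qed
    have arc: "(r, h) \<in> dag_arcs k F Ts"
      by (rule arcI) (use r hi d(1) in auto)
    show ?thesis
    proof (cases "r = i")
      case True then show ?thesis using arc by auto
    next
      case False
      then have "(i, r) \<in> Rr" using r hi cr d(2) eq by (intro IH1) auto
      then show ?thesis using arc by auto
    qed
  qed

  have C3: "(i, h) \<in> Rr" if eq: "eps F i = eps F h"
  proof -
    have e1: "eps F i \<notin> E i" using Fs(3)[of i] hi by simp
    have e2: "eps F i \<in> E (h - 1)" using Fs(4)[of h] hi eq by simp
    have "i \<noteq> h - 1" using e1 e2 by auto
    then have ih: "i < h - 1" using hi by simp
    obtain r where r: "i < r" "r \<le> h - 1" "phi F r = eps F i"
      "\<forall>p. r < p \<and> p \<le> h - 1 \<longrightarrow> eps F p \<noteq> eps F i"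
    proof -
      have "h - 1 \<le> k" using hi by simp
      from lc[OF ih this e1 e2] show ?thesis using that by blast
    qed
    have arc: "(r, h) \<in> dag_arcs k F Ts"
      by (rule arcI) (use r hi eq in auto)
    have "(i, r) \<in> Rr" using r hi by (intro IH2) auto
    then show ?thesis using arc by auto
  qed

  have C1: "(i, h) \<in> Rr" if cr0: "crosses (phi F h) (eps F i)"
  proof (cases "phi F h = eps F i \<or> eps F i = eps F h")
    case True then show ?thesis using C2 C3 by blast
  next
    case False
    obtain a b c d where d: "eps F h = {a, b}" "phi F h = {c, d}" "a \<noteq> b" "c \<noteq> d"
      "{a, b, c} \<in> Ts (h - 1)" "{a, b, d} \<in> Ts (h - 1)" "convex_quad a b c d"
      "Ts h = (Ts (h - 1) - {{a, b, c}, {a, b, d}}) \<union> {{a, c, d}, {b, c, d}}"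
      by (rule fdata[OF hh])
    have ds1: "a \<noteq> b" "a \<noteq> c" "b \<noteq> c" using tri_distinct[OF tri_is_tri[OF Th d(5)]] by auto
    have ds2: "a \<noteq> d" "b \<noteq> d" using tri_distinct[OF tri_is_tri[OF Th d(6)]] by auto
    have ei: "eps F i \<in> E (i - 1)" using Fs(4)[of i] hi by simp
    have cr: "crosses {c, d} (eps F i)" using cr0 d(2) by simp
    obtain g where g: "g \<in> {{a, b}, {a, c}, {b, c}, {a, d}, {b, d}}" "crosses g (eps F i)"
      using exit_quad[OF Th d(5) d(6) d(7) Ti ei cr] by blast
    have gE: "g \<in> E (h - 1)"
      using g(1) edgeI[OF ds1(1) d(5)] edgeI[OF ds1(2) d(5)] edgeI[OF ds1(3) d(5)]
        edgeI[OF ds2(1) d(6)] edgeI[OF ds2(2) d(6)] by auto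
    have gsh: "g = eps F h \<or> share_tri (Ts (h - 1)) g (eps F h)"
    proof -
      have "g = {a, b} \<or> g = {a, c} \<or> g = {b, c} \<or> g = {a, d} \<or> g = {b, d}" using g(1) by simp
      then show ?thesis
      proof (elim disjE)
        assume "g = {a, b}" then show ?thesis using d(1) by simp
      next
        assume gg: "g = {a, c}"
        have "g \<noteq> {a, b}" using gg ds1 by (auto simp: doubleton_eq_iff)
        then show ?thesis unfolding share_tri_def using d(1,5) gg ds1 by auto
      next
        assume gg: "g = {b, c}"
        have "g \<noteq> {a, b}" using gg ds1 by (auto simp: doubleton_eq_iff)
        then show ?thesis unfolding share_tri_def using d(1,5) gg ds1 by auto
      next
        assume gg: "g = {a, d}"
        have "g \<noteq> {a, b}" using gg ds2 by (auto simp: doubleton_eq_iff)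
        then show ?thesis unfolding share_tri_def using d(1,6) gg ds1 ds2 by auto
      next
        assume gg: "g = {b, d}"
        have "g \<noteq> {a, b}" using gg ds2 ds1 by (auto simp: doubleton_eq_iff)
        then show ?thesis unfolding share_tri_def using d(1,6) gg ds1 ds2 by auto
      qed
    qed
    have gne: "g \<noteq> eps F i"
    proof
      assume gi: "g = eps F i"
      then have "g \<noteq> eps F h" using False by simp
      then have "g \<in> E h" using Fs(2)[of h] hi gE by auto
      moreover have "{c, d} \<in> E h" using Fs(5)[of h] hi d(2) by simp
      ultimately have "{c, d} = g" using B[OF Th'] cr gi by blast
      then show False using False d(2) gi by simp
    qed
    have gi: "g \<notin> E (i - 1)"
    proof
      assume "g \<in> E (i - 1)"
      then have "g = eps F i" using B[OF Ti _ ei g(2)] by simp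
      then show False using gne by simp
    qed
    obtain r where r: "i - 1 < r" "r \<le> h - 1" "phi F r = g"
      "\<forall>p. r < p \<and> p \<le> h - 1 \<longrightarrow> eps F p \<noteq> g"
    proof -
      have "i - 1 < h - 1" "h - 1 \<le> k" using hi by auto
      from lc[OF this gi gE] show ?thesis using that by blast
    qed
    have arc: "(r, h) \<in> dag_arcs k F Ts"
      by (rule arcI) (use r hi gsh in auto)
    show ?thesis
    proof (cases "r = i")
      case True then show ?thesis using arc by auto
    next
      case False
      then have "(i, r) \<in> Rr" using r hi g(2) by (intro IH1) auto
      then show ?thesis using arc by auto
    qed
  qed

  have G: "\<exists>r. i \<le> r \<and> r \<le> j \<and> phi F r = e \<and> (r = i \<or> (i, r) \<in> Rr) \<and>
             (\<forall>p. r < p \<and> p \<le> j \<longrightarrow> eps F p \<noteq> e)"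
    if ge: "phi F i = e" "i \<le> j" "j < h" "e \<in> E j" for j e
  proof (cases "\<exists>p. i < p \<and> p \<le> j \<and> eps F p = e")
    case False
    then show ?thesis using ge by blast
  next
    case True
    define p0 where "p0 = (LEAST p. i < p \<and> p \<le> j \<and> eps F p = e)"
    have p0: "i < p0" "p0 \<le> j" "eps F p0 = e"
      using LeastI_ex[OF True] unfolding p0_def by auto
    have p0min: "\<not> (i < p \<and> p \<le> j \<and> eps F p = e)" if "p < p0" for p
      using not_less_Least[OF that[unfolded p0_def]] unfolding p0_def by blast
    have arc: "(i, p0) \<in> dag_arcs k F Ts"
    proof (rule arcI)
      show "\<forall>p. i < p \<and> p < p0 \<longrightarrow> eps F p \<noteq> phi F i" using p0min p0(2) ge(1) by auto
    qed (use hi p0 ge in auto)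
    have e1: "e \<notin> E p0" using Fs(3)[of p0] p0 hi ge by simp
    have "p0 \<noteq> j" using e1 ge(4) by auto
    then have pj: "p0 < j" using p0 by simp
    obtain r where r: "p0 < r" "r \<le> j" "phi F r = e" "\<forall>p. r < p \<and> p \<le> j \<longrightarrow> eps F p \<noteq> e"
    proof -
      have "j \<le> k" using hi ge by simp
      from lc[OF pj this e1 ge(4)] show ?thesis using that by blast
    qed
    have "(p0, r) \<in> Rr" using r p0 hi ge by (intro IH2) auto
    then have "(i, r) \<in> Rr" using arc by (meson r_into_trancl trancl_trans)
    then show ?thesis using r p0 by (intro exI[of _ r]) auto
  qed

  have C4a: "(i, h) \<in> Rr" if eq: "phi F i = eps F h"
  proof -
    have e: "eps F h \<in> E (h - 1)" using Fs(4)[of h] hi by simp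
    obtain r where r: "i \<le> r" "r \<le> h - 1" "phi F r = eps F h" "r = i \<or> (i, r) \<in> Rr"
      "\<forall>p. r < p \<and> p \<le> h - 1 \<longrightarrow> eps F p \<noteq> eps F h"
    proof -
      have "i \<le> h - 1" "h - 1 < h" using hi by auto
      from G[OF eq this e] show ?thesis using that by blast
    qed
    have arc: "(r, h) \<in> dag_arcs k F Ts"
      by (rule arcI) (use r hi in auto)
    show ?thesis using r(4) arc by auto
  qed

  have C4b: "(i, h) \<in> Rr" if sh: "share_tri (Ts j) (phi F i) (eps F h)" "i \<le> j" "j < h" for j
  proof -
    define e where "e = phi F i"
    define g where "g = eps F h"
    obtain t where t: "t \<in> Ts j" "e \<subseteq> t" "g \<subseteq> t" and eg: "e \<noteq> g" "card e = 2" "card g = 2"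
      using sh(1) unfolding share_tri_def e_def g_def by blast
    have ej: "e \<in> E j" using t eg unfolding tri_edges_def by blast
    obtain r where r: "i \<le> r" "r \<le> j" "phi F r = e" "r = i \<or> (i, r) \<in> Rr"
      "\<forall>p. r < p \<and> p \<le> j \<longrightarrow> eps F p \<noteq> e"
      using G[OF e_def[symmetric] sh(2) sh(3) ej] by auto
    have chain: "(i, h) \<in> Rr" if "(r, q) \<in> dag_arcs k F Ts" "(q, h) \<in> Rr" for q
    proof (cases "r = i")
      case True then show ?thesis using that by (meson r_into_trancl trancl_trans)
    next
      case False then have "(i, r) \<in> Rr" using r(4) by simp
      then show ?thesis using that by (meson r_into_trancl trancl_trans)
    qed
    show ?thesis
    proof (cases "\<exists>q. j < q \<and> q \<le> h - 1 \<and> t \<notin> Ts q")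
      case False
      have tin: "t \<in> Ts m" if "j \<le> m" "m \<le> h - 1" for m
        using False t(1) that by (cases "m = j") auto
      have nf: "eps F p \<noteq> e" if "j < p" "p \<le> h - 1" for p
      proof
        assume pe: "eps F p = e"
        have "e \<in> E p" using tin[of p] that t(2) eg(2) unfolding tri_edges_def by auto
        moreover have "1 \<le> p" "p \<le> k" using that hi by auto
        ultimately show False using Fs(3)[of p] pe by simp
      qed
      have arc: "(r, h) \<in> dag_arcs k F Ts"
      proof (rule arcI)
        have "t \<in> Ts (h - 1)" using tin[of "h - 1"] sh(3) by simp
        then have "share_tri (Ts (h - 1)) e g" unfolding share_tri_def using eg t(2,3) by blast
        then show "phi F r = eps F h \<or> share_tri (Ts (h - 1)) (phi F r) (eps F h)"
          using r(3) unfolding g_def by simp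
        show "\<forall>p. r < p \<and> p < h \<longrightarrow> eps F p \<noteq> phi F r"
        proof (intro allI impI)
          fix p assume p: "r < p \<and> p < h"
          show "eps F p \<noteq> phi F r"
          proof (cases "p \<le> j")
            case True then show ?thesis using r(5) p r(3) by auto
          next
            case False
            have "p \<le> h - 1" using p by arith
            then show ?thesis using nf[of p] p r(3) False by auto
          qed
        qed
      qed (use r hi sh in auto)
      then show ?thesis using r(4) by auto
    next
      case True
      define q where "q = (LEAST q. j < q \<and> q \<le> h - 1 \<and> t \<notin> Ts q)"
      have q: "j < q" "q \<le> h - 1" "t \<notin> Ts q"
        using LeastI_ex[OF True] unfolding q_def by auto
      have qmin: "t \<in> Ts m" if "j \<le> m" "m < q" for m
      proof (cases "m = j")
        case True then show ?thesis using t(1) by simp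
      next
        case False
        then have "\<not> (j < m \<and> m \<le> h - 1 \<and> t \<notin> Ts m)"
          using not_less_Least[of m "\<lambda>q. j < q \<and> q \<le> h - 1 \<and> t \<notin> Ts q"] that unfolding q_def by blast
        then show ?thesis using that q False by auto
      qed
      have tq1: "t \<in> Ts (q - 1)" using qmin[of "q - 1"] q by simp
      have q1: "1 \<le> q" "q \<le> k" using q hi by auto
      obtain a b c d where d: "eps F q = {a, b}" "phi F q = {c, d}" "a \<noteq> b" "c \<noteq> d"
        "{a, b, c} \<in> Ts (q - 1)" "{a, b, d} \<in> Ts (q - 1)" "convex_quad a b c d"
        "Ts q = (Ts (q - 1) - {{a, b, c}, {a, b, d}}) \<union> {{a, c, d}, {b, c, d}}"
        by (rule fdata[OF q1])
      have Tq: "triangulation P (Ts (q - 1))" using tri q1 by simp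
      have ds1: "a \<noteq> b" "a \<noteq> c" "b \<noteq> c" using tri_distinct[OF tri_is_tri[OF Tq d(5)]] by auto
      have ds2: "a \<noteq> d" "b \<noteq> d" using tri_distinct[OF tri_is_tri[OF Tq d(6)]] by auto
      have "t = {a, b, c} \<or> t = {a, b, d}" using tq1 q(3) d(8) by blast
      then obtain w w' where ww: "t = {a, b, w}" "{a, w, w'} \<in> Ts q" "{b, w, w'} \<in> Ts q"
        "phi F q = {w, w'}" "a \<noteq> w" "b \<noteq> w" "w \<noteq> w'" "a \<noteq> w'" "b \<noteq> w'"
      proof (elim disjE)
        have n1: "{a, c, d} \<in> Ts q" "{b, c, d} \<in> Ts q" using d(8) by simp_all
        assume "t = {a, b, c}"
        then show ?thesis by (rule that[of c d]) (use n1 d(2,4) ds1 ds2 in simp_all)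
      next
        have n1: "{a, c, d} \<in> Ts q" "{b, c, d} \<in> Ts q" using d(8) by simp_all
        have e1: "{a, d, c} = {a, c, d}" "{b, d, c} = {b, c, d}" "{d, c} = {c, d}" by auto
        assume "t = {a, b, d}"
        then show ?thesis by (rule that[of d c]) (use n1 d(2,4) ds1 ds2 e1 in simp_all)
      qed
      have nf: "eps F p \<noteq> e" if "j < p" "p < q" for p
      proof
        assume pe: "eps F p = e"
        have "e \<in> E p" using qmin[of p] that t(2) eg(2) unfolding tri_edges_def by auto
        moreover have "1 \<le> p" "p \<le> k" using that q hi by auto
        ultimately show False using Fs(3)[of p] pe by simp
      qed
      have e3: "e = {a, b} \<or> e = {a, w} \<or> e = {b, w}" using card2_sub3[OF eg(2)] t(2) ww(1) by blast
      have g3: "g = {a, b} \<or> g = {a, w} \<or> g = {b, w}" using card2_sub3[OF eg(3)] t(3) ww(1) by blast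
      have arc: "(r, q) \<in> dag_arcs k F Ts"
      proof (rule arcI)
        show "phi F r = eps F q \<or> share_tri (Ts (q - 1)) (phi F r) (eps F q)"
        proof (cases "e = {a, b}")
          case True then show ?thesis using r(3) d(1) by simp
        next
          case False
          then show ?thesis unfolding share_tri_def using r(3) d(1) eg(2) tq1 t(2) ww(1) ds1 by auto
        qed
        show "\<forall>p. r < p \<and> p < q \<longrightarrow> eps F p \<noteq> phi F r"
        proof (intro allI impI)
          fix p assume p: "r < p \<and> p < q"
          show "eps F p \<noteq> phi F r"
          proof (cases "p \<le> j")
            case True then show ?thesis using r(5) p r(3) by auto
          next
            case False then show ?thesis using nf[of p] p r(3) by auto
          qed
        qed
      qed (use r q hi sh in auto)
      have hq: "h - q < h - i" using q sh(2) hi by auto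
      have qh: "q < h" using q hi by auto
      have "(q, h) \<in> Rr"
      proof -
        have "g = {a, b} \<or> g = {a, w} \<or> g = {b, w}" by (rule g3)
        then show ?thesis
        proof (elim disjE)
          assume gg: "g = {a, b}"
          have "eps F q = eps F h" using d(1) gg unfolding g_def by simp
          then show ?thesis by (rule IH3[OF hq q1(1) qh hi(3)])
        next
          assume gg: "g = {a, w}"
          have ne: "{w, w'} \<noteq> {a, w}" using ww(5,7,8) by (auto simp: doubleton_eq_iff)
          have c1: "card {w, w'} = 2" using ww(7) by simp
          have c2: "card {a, w} = 2" using ww(5) by simp
          have sub: "{w, w'} \<subseteq> {a, w, w'}" "{a, w} \<subseteq> {a, w, w'}" by auto
          have "share_tri (Ts q) {w, w'} {a, w}" unfolding share_tri_def using ne c1 c2 sub ww(2) by blast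
          then have "share_tri (Ts q) (phi F q) (eps F h)" using ww(4) gg unfolding g_def by simp
          then show ?thesis by (rule IH4[OF hq q1(1) qh hi(3) _ order.refl qh])
        next
          assume gg: "g = {b, w}"
          have ne: "{w, w'} \<noteq> {b, w}" using ww(6,7,9) by (auto simp: doubleton_eq_iff)
          have c1: "card {w, w'} = 2" using ww(7) by simp
          have c2: "card {b, w} = 2" using ww(6) by simp
          have sub: "{w, w'} \<subseteq> {b, w, w'}" "{b, w} \<subseteq> {b, w, w'}" by auto
          have "share_tri (Ts q) {w, w'} {b, w}" unfolding share_tri_def using ne c1 c2 sub ww(3) by blast
          then have "share_tri (Ts q) (phi F q) (eps F h)" using ww(4) gg unfolding g_def by simp
          then show ?thesis by (rule IH4[OF hq q1(1) qh hi(3) _ order.refl qh])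
        qed
      qed
      then show ?thesis using chain arc by blast
    qed
  qed

  show ?case using less.prems(5) C1 C2 C3 C4a C4b by blast
qed

end

lemma restrict:
  assumes "(i, h) \<in> A\<^sup>+" "i \<in> C" "C = {j \<in> {1..k}. (i0, j) \<in> (A \<union> A\<inverse>)\<^sup>*}"
    "A \<subseteq> {1..k} \<times> {1..k}"
  shows "(i, h) \<in> (A \<inter> C \<times> C)\<^sup>+"
proof -
  have "(i, h) \<in> (A \<inter> C \<times> C)\<^sup>+ \<and> h \<in> C" using assms(1)
  proof (induction rule: trancl_induct)
    case (base y)
    have "(i0, i) \<in> (A \<union> A\<inverse>)\<^sup>*" using assms(2,3) by blast
    moreover have "(i, y) \<in> A \<union> A\<inverse>" using base by blast
    ultimately have "(i0, y) \<in> (A \<union> A\<inverse>)\<^sup>*" by (rule rtrancl_into_rtrancl)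
    moreover have "y \<in> {1..k}" using base assms(4) by blast
    ultimately have yC: "y \<in> C" using assms(3) by blast
    then have "(i, y) \<in> A \<inter> C \<times> C" using base assms(2) by blast
    then show ?case using yC by blast
  next
    case (step y z)
    have "(i0, y) \<in> (A \<union> A\<inverse>)\<^sup>*" using step(3) assms(3) by blast
    moreover have "(y, z) \<in> A \<union> A\<inverse>" using step(2) by blast
    ultimately have "(i0, z) \<in> (A \<union> A\<inverse>)\<^sup>*" by (rule rtrancl_into_rtrancl)
    moreover have "z \<in> {1..k}" using step(2) assms(4) by blast
    ultimately have zC: "z \<in> C" using assms(3) by blast
    then have "(y, z) \<in> A \<inter> C \<times> C" using step(2,3) by blast
    then have "(i, z) \<in> (A \<inter> C \<times> C)\<^sup>+" using step(3) by (meson trancl_into_trancl)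
    then show ?case using zC by blast
  qed
  then show ?thesis by blast
qed

theorem lemma7:
  fixes P :: "pt set" and Ti Tf :: "pt set set" and k :: nat
    and F :: "nat \<Rightarrow> pt set \<times> pt set" and Ts :: "nat \<Rightarrow> pt set set"
    and C :: "nat set" and i h :: nat
  assumes "finite P"
    and "normalized P Ti Tf k F Ts"
    and "C \<in> dag_components k F Ts"
    and "i \<in> C" and "h \<in> C" and "i < h"
    and "crosses (phi F h) (eps F i) \<or> phi F h = eps F i \<or> eps F i = eps F h \<or>
         phi F i = eps F h \<or> (\<exists>j. i \<le> j \<and> j < h \<and> share_tri (Ts j) (phi F i) (eps F h))"
  shows "(i, h) \<in> (dag_arcs k F Ts \<inter> C \<times> C)\<^sup>+"
proof -
  have sol: "is_solution P Ti Tf k F Ts" using assms(2) unfolding normalized_def by (rule conjunct1)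
  have vs: "valid_seq P Ti k F Ts" "Ts k = Tf" "triangulation P Tf"
    using sol unfolding is_solution_def by blast+
  have st: "\<forall>j\<in>{1..k}. flip_step P (Ts (j - 1)) (eps F j) (phi F j) (Ts j)"
    using vs(1) unfolding valid_seq_def by (rule conjunct2)
  have tk: "triangulation P (Ts k)" using vs(2,3) by simp
  interpret fs: fseq P k F Ts using st tk by unfold_locales
  obtain i0 where C: "C = {j \<in> {1..k}. (i0, j) \<in> (dag_arcs k F Ts \<union> (dag_arcs k F Ts)\<inverse>)\<^sup>*}"
    using assms(3) unfolding dag_components_def by blast
  have ik: "1 \<le> i" "h \<le> k" using assms(4,5) C by auto
  have "(i, h) \<in> (dag_arcs k F Ts)\<^sup>+"
    by (rule fs.main[OF refl ik(1) assms(6) ik(2) assms(7)])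
  moreover have "dag_arcs k F Ts \<subseteq> {1..k} \<times> {1..k}"
    unfolding dag_arcs_def adjacent_def by auto
  ultimately show ?thesis using restrict[OF _ assms(4) C] by blast
qed

end
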